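(* Let $a$ and $b$ be relatively prime integers with $1<a<b$ and $S=\langle a,b\rangle$. Let $x\in I(S)$. If $n$ is the smallest positive integer such that $x+na\in S$, then $x+na\in b\mathbb{N}$.
   Context: $\mathbb{N}$ is the set of nonnegative integers, $b\mathbb{N}=\{bk:k\in\mathbb{N}\}$, and $\langle a,b\rangle=\{\lambda_1a+\lambda_2b:\lambda_1,\lambda_2\in\mathbb{N}\}$. $I(S)$ is the set of isolated gaps of $S$, i.e. elements $x\in\mathbb{N}\setminus S$ with $x-1,x+1\in S$. *)

theory Defs
  imports Main
begin

definition gen2 :: "nat \<Rightarrow> nat \<Rightarrow> nat set" where
  "gen2 a b = {l1 * a + l2 * b | l1 l2. True}"

definition isolated_gaps :: "nat set \<Rightarrow> nat set" where
  "isolated_gaps S = {x. x \<notin> S \<and> x \<ge> 1 \<and> x - 1 \<in> S \<and> x + 1 \<in> S}"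

definition multiples :: "nat \<Rightarrow> nat set" where
  "multiples b = {b * k | k. True}"

end

theory Submission
  imports Defs
begin

theorem lemma4p5:
  fixes a b x n :: nat
  assumes "coprime a b" and "1 < a" and "a < b"
    and "x \<in> isolated_gaps (gen2 a b)"
    and "n > 0" and "x + n * a \<in> gen2 a b"
    and "\<And>m. 0 < m \<Longrightarrow> m < n \<Longrightarrow> x + m * a \<notin> gen2 a b"
  shows "x + n * a \<in> multiples b"
proof -
  have xS: "x \<notin> gen2 a b" using assms(4) by (simp add: isolated_gaps_def)
  obtain l1 l2 where e: "x + n * a = l1 * a + l2 * b" using assms(6) by (auto simp: gen2_def)
  have "\<not> n \<le> l1"
  proof
    assume h: "n \<le> l1"
    then have "x = (l1 - n) * a + l2 * b" using e by (simp add: diff_mult_distrib)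
    then show False using xS by (auto simp: gen2_def)
  qed
  moreover have "l1 = 0"
  proof (rule ccontr)
    assume "l1 \<noteq> 0"
    with \<open>\<not> n \<le> l1\<close> have n1: "0 < n - 1" "n - 1 < n" "1 \<le> l1" by auto
    have "x + (n - 1) * a = (l1 - 1) * a + l2 * b"
      using e n1 \<open>\<not> n \<le> l1\<close> by (simp add: diff_mult_distrib)
    then have "x + (n - 1) * a \<in> gen2 a b" by (auto simp: gen2_def)
    with assms(7)[OF n1(1) n1(2)] show False by simp
  qed
  ultimately show ?thesis using e by (auto simp: multiples_def)
qed

end
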